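(* There exists a constant $C$, independent of $\sigma_0$, such that for every $\sigma_0\in(0,1)$, $$|\partial_x\theta^{\sigma_0}(t,x)|\le \frac{C}{\sigma_0^2},\qquad (t,x)\in[0,T)\times\mathbb{R}.$$
   Context: Fix $T>0$, $\kappa\in\mathbb{R}$, $\delta\in(0,T)$. Let $\eta$ solve $\eta_t'=\eta_t^2-2\kappa\eta_t-1$, $\eta_T=1$ on $[0,T]$; set $w_t=\exp(\int_t^T(\eta_s-\kappa)ds)$, $r_t=\int_t^Tw_s^{-2}ds$. Define $g(x)=-x/r_\delta$ if $|x|\le r_\delta$, $g(x)=-\mathrm{sign}(x)$ if $|x|>r_\delta$. For $\sigma_0\in(0,1)$, $\theta^{\sigma_0}$ denotes the unique bounded classical solution (in $C^{1,2}([0,T)\times\mathbb{R})\cap C([0,T]\times\mathbb{R})$) of $$\partial_t\theta-w_t^{-2}\theta\,\partial_x\theta+\tfrac12\sigma_0^2w_t^{-2}\partial^2_{xx}\theta=0\ \text{on }[0,T)\times\mathbb{R},\qquad \theta(T,\cdot)=g.$$ *)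

theory Defs
  imports "HOL-Analysis.Analysis"
begin

definition riccati_sol :: "real \<Rightarrow> real \<Rightarrow> (real \<Rightarrow> real) \<Rightarrow> bool" where
  "riccati_sol T \<kappa> \<eta> \<longleftrightarrow>
     (\<forall>t\<in>{0..T}. (\<eta> has_real_derivative ((\<eta> t)^2 - 2 * \<kappa> * \<eta> t - 1)) (at t within {0..T}))
     \<and> \<eta> T = 1"

definition wfun :: "real \<Rightarrow> real \<Rightarrow> (real \<Rightarrow> real) \<Rightarrow> real \<Rightarrow> real" where
  "wfun T \<kappa> \<eta> t = exp (integral {t..T} (\<lambda>s. \<eta> s - \<kappa>))"

definition rfun :: "real \<Rightarrow> real \<Rightarrow> (real \<Rightarrow> real) \<Rightarrow> real \<Rightarrow> real" where
  "rfun T \<kappa> \<eta> t = integral {t..T} (\<lambda>s. 1 / (wfun T \<kappa> \<eta> s)^2)"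

definition gfun :: "real \<Rightarrow> real \<Rightarrow> (real \<Rightarrow> real) \<Rightarrow> real \<Rightarrow> real \<Rightarrow> real" where
  "gfun T \<kappa> \<eta> \<delta> x =
     (if \<bar>x\<bar> \<le> rfun T \<kappa> \<eta> \<delta> then - x / rfun T \<kappa> \<eta> \<delta> else - sgn x)"

definition classical_sol ::
  "real \<Rightarrow> real \<Rightarrow> (real \<Rightarrow> real) \<Rightarrow> real \<Rightarrow> real \<Rightarrow> (real \<Rightarrow> real \<Rightarrow> real) \<Rightarrow> bool" where
  "classical_sol T \<kappa> \<eta> \<delta> \<sigma>\<^sub>0 \<theta> \<longleftrightarrow>
     (\<exists>\<theta>t \<theta>x \<theta>xx.
        (\<forall>t\<in>{0..<T}. \<forall>x.
            ((\<lambda>s. \<theta> s x) has_real_derivative \<theta>t t x) (at t within {0..<T})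
          \<and> ((\<lambda>y. \<theta> t y) has_real_derivative \<theta>x t x) (at x)
          \<and> ((\<lambda>y. \<theta>x t y) has_real_derivative \<theta>xx t x) (at x)
          \<and> \<theta>t t x - (1 / (wfun T \<kappa> \<eta> t)^2) * \<theta> t x * \<theta>x t x
              + 1/2 * \<sigma>\<^sub>0^2 * (1 / (wfun T \<kappa> \<eta> t)^2) * \<theta>xx t x = 0)
      \<and> continuous_on ({0..<T} \<times> UNIV) (\<lambda>(t,x). \<theta>t t x)
      \<and> continuous_on ({0..<T} \<times> UNIV) (\<lambda>(t,x). \<theta>x t x)
      \<and> continuous_on ({0..<T} \<times> UNIV) (\<lambda>(t,x). \<theta>xx t x))
     \<and> continuous_on ({0..T} \<times> UNIV) (\<lambda>(t,x). \<theta> t x)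
     \<and> (\<exists>B. \<forall>t\<in>{0..T}. \<forall>x. \<bar>\<theta> t x\<bar> \<le> B)
     \<and> (\<forall>x. \<theta> T x = gfun T \<kappa> \<eta> \<delta> x)"

end

theory Submission
  imports Defs
begin


definition prim :: "(real \<Rightarrow> real) \<Rightarrow> real \<Rightarrow> real" where
  "prim f x = x * integral {0..1} (\<lambda>s. f (s*x))"

lemma prim_pos:
  assumes "continuous_on UNIV f" "0 \<le> x"
  shows "prim f x = integral {0..x} f"
proof (cases "x = 0")
  case True then show ?thesis by (simp add: prim_def)
next
  case False
  then have x: "x > 0" using assms by auto
  have "(f has_integral integral {0..x} f) (cbox 0 x)"
    using integrable_continuous_real[of 0 x f] assms(1) continuous_on_subset
    by (metis box_real(2) has_integral_integral subset_UNIV)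
  from has_integral_affinity[OF this, of x 0] x
  have "((\<lambda>s. f (x * s)) has_integral (1/x) * integral {0..x} f) ((\<lambda>y. y/x) ` {0..x})"
    by simp
  moreover have "(\<lambda>y. y/x) ` {0..x} = {0..1}"
  proof
    show "(\<lambda>y. y/x) ` {0..x} \<subseteq> {0..1}" using x by (auto simp: field_simps)
    show "{0..1} \<subseteq> (\<lambda>y. y/x) ` {0..x}"
    proof
      fix s assume "s \<in> {0..(1::real)}"
      then show "s \<in> (\<lambda>y. y/x) ` {0..x}" using x
        by (intro image_eqI[of _ _ "s*x"]) (auto simp: field_simps mult_le_cancel_right1)
    qed
  qed
  ultimately have "integral {0..1} (\<lambda>s. f (s*x)) = (1/x) * integral {0..x} f"
    by (simp add: integral_unique mult.commute)
  then show ?thesis using x by (simp add: prim_def)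
qed

lemma prim_neg:
  assumes "continuous_on UNIV f" "x \<le> 0"
  shows "prim f x = - integral {x..0} f"
proof (cases "x = 0")
  case True then show ?thesis by (simp add: prim_def)
next
  case False
  then have x: "x < 0" using assms by auto
  have "(f has_integral integral {x..0} f) (cbox x 0)"
    using integrable_continuous_real[of x 0 f] assms(1) continuous_on_subset
    by (metis box_real(2) has_integral_integral subset_UNIV)
  from has_integral_affinity[OF this, of x 0] x
  have "((\<lambda>s. f (x * s)) has_integral (1/ \<bar>x\<bar>) * integral {x..0} f) ((\<lambda>y. y/x) ` {x..0})"
    by simp
  moreover have "(\<lambda>y. y/x) ` {x..0} = {0..1}"
  proof
    show "(\<lambda>y. y/x) ` {x..0} \<subseteq> {0..1}" using x by (auto simp: divide_simps)
    show "{0..1} \<subseteq> (\<lambda>y. y/x) ` {x..0}"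
    proof
      fix s assume "s \<in> {0..(1::real)}"
      then have s: "0 \<le> s" "s \<le> 1" by auto
      have "0 \<le> (s-1)*x" using s x by (intro mult_nonpos_nonpos) auto
      then have "x \<le> s*x" by (simp add: algebra_simps)
      moreover have "s*x \<le> 0" using s x by (simp add: mult_nonneg_nonpos)
      ultimately show "s \<in> (\<lambda>y. y/x) ` {x..0}" using x
        by (intro image_eqI[of _ _ "s*x"]) auto
    qed
  qed
  ultimately have "integral {0..1} (\<lambda>s. f (s*x)) = (1/ \<bar>x\<bar>) * integral {x..0} f"
    by (simp add: integral_unique mult.commute)
  then show ?thesis using x by (simp add: prim_def)
qed

lemma prim_combine:
  assumes "continuous_on UNIV f" "a \<le> 0" "a \<le> x"
  shows "prim f x = integral {a..x} f - integral {a..0} f"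
proof -
  have int: "f integrable_on {u..v}" for u v
    using integrable_continuous_real assms(1) continuous_on_subset by blast
  show ?thesis
  proof (cases "0 \<le> x")
    case True
    then show ?thesis using prim_pos[OF assms(1) True] Henstock_Kurzweil_Integration.integral_combine[OF assms(2) True int]
      by simp
  next
    case False
    then show ?thesis using prim_neg[OF assms(1)] Henstock_Kurzweil_Integration.integral_combine[OF assms(3) _ int, of 0] False
      by simp
  qed
qed

lemma prim_deriv:
  assumes "continuous_on UNIV f"
  shows "(prim f has_real_derivative f x) (at x)"
proof -
  define a where "a = - \<bar>x\<bar> - 1"
  define b where "b = \<bar>x\<bar> + 1"
  have c: "continuous_on {a..b} f" using assms continuous_on_subset by blast
  have ab: "a < x" "x < b" unfolding a_def b_def by linarith+
  then have x: "x \<in> {a..b}" by simp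
  have "((\<lambda>y. integral {a..y} f - integral {a..0} f) has_real_derivative f x) (at x within {a..b})"
    using DERIV_diff[OF integral_has_real_derivative[OF c x] DERIV_const[of "integral {a..0} f"]] by simp
  moreover have "x \<in> interior {a..b}" using ab by (simp only: interior_atLeastAtMost_real) simp
  ultimately have d: "((\<lambda>y. integral {a..y} f - integral {a..0} f) has_real_derivative f x) (at x)"
    by (simp only: at_within_interior)
  have eq: "\<And>y. y \<in> {a<..<b} \<Longrightarrow> integral {a..y} f - integral {a..0} f = prim f y"
  proof -
    fix y assume "y \<in> {a<..<b}"
    then have "a \<le> y" by simp
    moreover have "a \<le> 0" unfolding a_def by linarith
    ultimately show "integral {a..y} f - integral {a..0} f = prim f y"
      using prim_combine[OF assms, of a y] by simp
  qed
  show ?thesis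
    by (rule has_field_derivative_transform_within_open[OF d open_greaterThanLessThan _ eq]) (use ab in simp)
qed

lemma prim_ftc:
  assumes "continuous_on UNIV f" "\<And>y. (H has_real_derivative f y) (at y)"
  shows "prim f x = H x - H 0"
proof -
  have "\<And>y. ((\<lambda>y. prim f y - H y) has_real_derivative 0) (at y)"
    using DERIV_diff[OF prim_deriv[OF assms(1)] assms(2)] by simp
  then have "prim f x - H x = prim f 0 - H 0"
    by (intro DERIV_isconst_all) auto
  then show ?thesis by (simp add: prim_def)
qed



lemma second_deriv_max:
  fixes f f' :: "real \<Rightarrow> real"
  assumes d1: "\<And>y. (f has_real_derivative f' y) (at y)"
    and d2: "(f' has_real_derivative c) (at x)"
    and rho: "0 < \<rho>" and mx: "\<And>y. \<bar>y - x\<bar> < \<rho> \<Longrightarrow> f y \<le> f x"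
  shows "c \<le> 0"
proof (rule ccontr)
  assume "\<not> c \<le> 0" then have c: "0 < c" by simp
  have f'0: "f' x = 0"
    by (rule DERIV_local_max[OF d1 rho]) (use mx in \<open>auto simp: abs_minus_commute\<close>)
  obtain d where d: "d > 0" "\<And>h. h > 0 \<Longrightarrow> h < d \<Longrightarrow> f' x < f' (x + h)"
    using DERIV_pos_inc_right[OF d2 c] by blast
  define h where "h = min d \<rho> / 2"
  have h: "0 < h" "h < d" "h < \<rho>" using d rho by (auto simp: h_def)
  have "\<exists>l z. x < z \<and> z < x + h \<and> DERIV f z :> l \<and> f (x + h) - f x = (x + h - x) * l"
  proof (rule MVT)
    show "continuous_on {x..x + h} f"
      by (intro continuous_at_imp_continuous_on ballI DERIV_isCont[OF d1])
  qed (use h d1 in \<open>auto intro: real_differentiable_def[THEN iffD2]\<close>)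
  then obtain l z where z: "x < z" "z < x + h" "DERIV f z :> l" "f (x + h) - f x = h * l"
    by auto
  have "l = f' z" using DERIV_unique[OF z(3) d1] .
  moreover have "f' x < f' (x + (z - x))" using z h by (intro d(2)) auto
  ultimately have "l > 0" using f'0 by simp
  then have "f (x + h) > f x" using z h by (simp add: algebra_simps)
  moreover have "f (x + h) \<le> f x" using mx[of "x+h"] h by simp
  ultimately show False by simp
qed

lemma right_max_deriv:
  fixes f :: "real \<Rightarrow> real"
  assumes d: "(f has_real_derivative c) (at t within S)"
    and rho: "0 < \<rho>" and inS: "\<And>h. 0 < h \<Longrightarrow> h < \<rho> \<Longrightarrow> t + h \<in> S"
    and mx: "\<And>h. 0 < h \<Longrightarrow> h < \<rho> \<Longrightarrow> f (t + h) \<le> f t"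
  shows "c \<le> 0"
proof (rule ccontr)
  assume "\<not> c \<le> 0" then have c: "0 < c" by simp
  obtain e where e: "e > 0" "\<And>h. h > 0 \<Longrightarrow> t + h \<in> S \<Longrightarrow> h < e \<Longrightarrow> f t < f (t + h)"
    using has_real_derivative_pos_inc_right[OF d c] by blast
  define h where "h = min e \<rho> / 2"
  have h: "0 < h" "h < e" "h < \<rho>" using e rho by (auto simp: h_def)
  show False using e(2)[of h] inS[of h] mx[of h] h by simp
qed



lemma max_principle:
  fixes D Dt Dx Dxx :: "real \<Rightarrow> real \<Rightarrow> real" and a :: "real \<Rightarrow> real"
  assumes T: "0 < T"
    and cont: "continuous_on ({0..T} \<times> UNIV) (\<lambda>(t,x). D t x)"
    and dert: "\<And>t x. t \<in> {0..<T} \<Longrightarrow> ((\<lambda>s. D s x) has_real_derivative Dt t x) (at t within {0..<T})"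
    and derx: "\<And>t x y. t \<in> {0..<T} \<Longrightarrow> ((\<lambda>y. D t y) has_real_derivative Dx t y) (at y)"
    and derxx: "\<And>t x. t \<in> {0..<T} \<Longrightarrow> ((\<lambda>y. Dx t y) has_real_derivative Dxx t x) (at x)"
    and pde: "\<And>t x. t \<in> {0..<T} \<Longrightarrow> Dt t x + a t * Dxx t x = 0"
    and apos: "\<And>t. t \<in> {0..<T} \<Longrightarrow> 0 \<le> a t" and abd: "\<And>t. t \<in> {0..<T} \<Longrightarrow> a t \<le> A"
    and growth: "\<And>t x. t \<in> {0..T} \<Longrightarrow> D t x \<le> M * exp (k * \<bar>x\<bar>)"
    and termc: "\<And>x. D T x \<le> 0"
    and t0: "t0 \<in> {0..T}"
  shows "D t0 x0 \<le> 0"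
proof (rule ccontr)
  assume "\<not> D t0 x0 \<le> 0"
  then have pos: "D t0 x0 > 0" by simp
  have t0T: "t0 < T" using pos termc[of x0] t0 by (cases "t0 = T") auto
  define K where "K = \<bar>k\<bar> + 1"
  define L where "L = max A 0 * K^2 + 1"
  define B where "B t x = exp (L * (T - t)) * (exp (K*x) + exp (-(K*x)))" for t x
  have Bpos: "B t x > 0" for t x by (simp add: B_def add_pos_pos)
  define \<epsilon> where "\<epsilon> = D t0 x0 / (2 * B t0 x0)"
  have eps: "\<epsilon> > 0" using pos Bpos by (simp add: \<epsilon>_def)
  define E where "E t x = D t x - \<epsilon> * B t x" for t x
  have E0: "E t0 x0 = D t0 x0 / 2" using Bpos[of t0 x0] by (simp add: E_def \<epsilon>_def)
  define R where "R = \<bar>x0\<bar> + \<bar>M\<bar> / \<epsilon> + 1"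
  have far: "E t x < 0" if t: "t \<in> {0..T}" and x: "R \<le> \<bar>x\<bar>" for t x
  proof -
    have "D t x \<le> M * exp (k * \<bar>x\<bar>)" using growth t by simp
    also have "\<dots> \<le> \<bar>M\<bar> * exp (\<bar>k\<bar> * \<bar>x\<bar>)"
      by (intro mult_mono) (auto simp: abs_mult[symmetric] abs_le_iff mult_right_mono)
    also have "\<dots> < \<epsilon> * exp (\<bar>x\<bar>) * exp (\<bar>k\<bar> * \<bar>x\<bar>)"
    proof -
      have "\<bar>M\<bar> / \<epsilon> < \<bar>x\<bar> + 1" using x by (simp add: R_def)
      also have "\<dots> \<le> exp \<bar>x\<bar>" using exp_ge_add_one_self[of "\<bar>x\<bar>"] by linarith
      finally have "\<bar>M\<bar> < \<epsilon> * exp \<bar>x\<bar>" using eps by (simp add: divide_less_eq mult.commute)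
      then show ?thesis by simp
    qed
    also have "\<dots> = \<epsilon> * exp (K * \<bar>x\<bar>)" by (simp add: K_def exp_add[symmetric] algebra_simps)
    also have "\<dots> \<le> \<epsilon> * B t x"
    proof -
      have "exp (K * \<bar>x\<bar>) \<le> exp (K*x) + exp (-(K*x))" by (cases "x \<ge> 0") auto
      also have "\<dots> \<le> exp (L * (T - t)) * (exp (K*x) + exp (-(K*x)))"
      proof -
        have "1 \<le> exp (L * (T - t))" using t by (simp add: L_def add_pos_nonneg)
        then show ?thesis by (simp add: add_pos_pos)
      qed
      finally show ?thesis using eps by (simp add: B_def)
    qed
    finally show ?thesis by (simp add: E_def)
  qed
  define S where "S = {t0..T} \<times> {-R..R}"
  have cS: "compact S" by (simp add: S_def compact_Times)
  have R0: "\<bar>M\<bar> / \<epsilon> \<ge> 0" using eps by simp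
  have x0R: "-R \<le> x0 \<and> x0 \<le> R" using R0 unfolding R_def by (cases "x0 \<ge> 0") auto
  have t0S: "(t0, x0) \<in> S" using t0T x0R by (auto simp: S_def)
  then have neS: "S \<noteq> {}" by auto
  have contE: "continuous_on S (\<lambda>p. E (fst p) (snd p))"
  proof -
    have "continuous_on S (\<lambda>(t,x). D t x)"
      by (rule continuous_on_subset[OF cont]) (use t0 in \<open>auto simp: S_def\<close>)
    then have c1: "continuous_on S (\<lambda>p. D (fst p) (snd p))" by (simp add: case_prod_beta)
    have c2: "continuous_on S (\<lambda>p. B (fst p) (snd p))"
      unfolding B_def by (intro continuous_intros)
    show ?thesis unfolding E_def by (intro continuous_intros c1 c2)
  qed
  obtain p where pS: "p \<in> S" and pmax: "\<And>q. q \<in> S \<Longrightarrow> E (fst q) (snd q) \<le> E (fst p) (snd p)"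
    using continuous_attains_sup[OF cS neS contE] by blast
  obtain tm xm where p: "p = (tm, xm)" by (cases p)
  have Em: "E tm xm \<ge> D t0 x0 / 2" using pmax[OF t0S] E0 by (simp add: p)
  have tmS: "t0 \<le> tm" "tm \<le> T" "-R \<le> xm" "xm \<le> R" using pS by (auto simp: S_def p)
  have tmT: "tm < T"
  proof (rule ccontr)
    assume "\<not> tm < T" then have "tm = T" using tmS by simp
    moreover have "0 < \<epsilon> * B T xm" using Bpos[of T xm] eps by simp
    ultimately have "E tm xm \<le> 0" using termc[of xm] by (simp add: E_def)
    then show False using Em pos by simp
  qed
  have tm0: "tm \<in> {0..<T}" using tmS tmT t0 by auto
  have xmR: "\<bar>xm\<bar> < R"
  proof (rule ccontr)
    assume "\<not> \<bar>xm\<bar> < R"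
    then have "E tm xm < 0" using far[of tm xm] tm0 by simp
    then show False using Em pos by simp
  qed
  define Bx where "Bx t x = exp (L * (T - t)) * (K * exp (K*x) - K * exp (-(K*x)))" for t x
  have dBx: "((\<lambda>y. B t y) has_real_derivative Bx t y) (at y)" for t y
    unfolding B_def Bx_def by (auto intro!: derivative_eq_intros)
  have dBxx: "((\<lambda>y. Bx t y) has_real_derivative K^2 * B t y) (at y)" for t y
    unfolding B_def Bx_def by (auto intro!: derivative_eq_intros simp: power2_eq_square algebra_simps)
  have dBt: "((\<lambda>s. B s y) has_real_derivative - L * B t y) (at t within X)" for t y X
    unfolding B_def by (auto intro!: derivative_eq_intros simp: algebra_simps)
  have xs: "Dxx tm xm - \<epsilon> * (K^2 * B tm xm) \<le> 0"
  proof (rule second_deriv_max)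
    show "((\<lambda>y. E tm y) has_real_derivative Dx tm y - \<epsilon> * Bx tm y) (at y)" for y
      unfolding E_def by (intro DERIV_diff derx[OF tm0] DERIV_cmult dBx)
    show "((\<lambda>y. Dx tm y - \<epsilon> * Bx tm y) has_real_derivative Dxx tm xm - \<epsilon> * (K^2 * B tm xm)) (at xm)"
      by (intro DERIV_diff derxx[OF tm0] DERIV_cmult dBxx)
    show "0 < R - \<bar>xm\<bar>" using xmR by simp
    fix y assume "\<bar>y - xm\<bar> < R - \<bar>xm\<bar>"
    then have "(tm, y) \<in> S" using tmS by (auto simp: S_def)
    then show "E tm y \<le> E tm xm" using pmax[of "(tm,y)"] by (simp add: p)
  qed
  have ts: "Dt tm xm - \<epsilon> * (- L * B tm xm) \<le> 0"
  proof (rule right_max_deriv)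
    show "((\<lambda>s. E s xm) has_real_derivative Dt tm xm - \<epsilon> * (- L * B tm xm)) (at tm within {0..<T})"
      unfolding E_def by (intro DERIV_diff dert[OF tm0] DERIV_cmult dBt)
    show "0 < T - tm" using tmT by simp
    fix h :: real assume h: "0 < h" "h < T - tm"
    then show "tm + h \<in> {0..<T}" using tm0 by auto
    have "(tm + h, xm) \<in> S" using h tmS by (auto simp: S_def)
    then show "E (tm + h) xm \<le> E tm xm" using pmax[of "(tm+h,xm)"] by (simp add: p)
  qed
  have "0 = Dt tm xm + a tm * Dxx tm xm" using pde[OF tm0] by simp
  also have "\<dots> \<le> - \<epsilon> * L * B tm xm + a tm * (\<epsilon> * K^2 * B tm xm)"
    using ts xs apos[OF tm0] by (intro add_mono mult_left_mono) (auto simp: algebra_simps)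
  also have "\<dots> = \<epsilon> * B tm xm * (a tm * K^2 - L)" by (simp add: algebra_simps)
  also have "\<dots> < 0"
  proof -
    have "a tm * K^2 \<le> max A 0 * K^2" using abd[OF tm0] by (intro mult_right_mono) auto
    then have "a tm * K^2 - L < 0" by (simp add: L_def)
    then show ?thesis using eps Bpos[of tm xm] by (simp add: mult_pos_neg)
  qed
  finally show False by simp
qed



locale sol =
  fixes T \<kappa> \<delta> \<sigma> :: real and \<eta> :: "real \<Rightarrow> real"
    and \<theta> \<theta>t \<theta>x \<theta>xx :: "real \<Rightarrow> real \<Rightarrow> real" and Bd :: real
  assumes T: "0 < T" and \<delta>: "0 < \<delta>" "\<delta> < T"
    and ric: "riccati_sol T \<kappa> \<eta>"
    and \<sigma>: "0 < \<sigma>" "\<sigma> < 1"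
    and der: "\<And>t x. t \<in> {0..<T} \<Longrightarrow>
            ((\<lambda>s. \<theta> s x) has_real_derivative \<theta>t t x) (at t within {0..<T})
          \<and> ((\<lambda>y. \<theta> t y) has_real_derivative \<theta>x t x) (at x)
          \<and> ((\<lambda>y. \<theta>x t y) has_real_derivative \<theta>xx t x) (at x)
          \<and> \<theta>t t x - (1 / (wfun T \<kappa> \<eta> t)^2) * \<theta> t x * \<theta>x t x
              + 1/2 * \<sigma>^2 * (1 / (wfun T \<kappa> \<eta> t)^2) * \<theta>xx t x = 0"
    and ct: "continuous_on ({0..<T} \<times> UNIV) (\<lambda>(t,x). \<theta>t t x)"
    and cx: "continuous_on ({0..<T} \<times> UNIV) (\<lambda>(t,x). \<theta>x t x)"
    and c0: "continuous_on ({0..T} \<times> UNIV) (\<lambda>(t,x). \<theta> t x)"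
    and bd: "\<And>t x. t \<in> {0..T} \<Longrightarrow> \<bar>\<theta> t x\<bar> \<le> Bd"
    and termi: "\<And>x. \<theta> T x = gfun T \<kappa> \<eta> \<delta> x"
begin

definition "w t = wfun T \<kappa> \<eta> t"
definition "wi t = 1 / (w t)^2"
definition "r = rfun T \<kappa> \<eta> \<delta>"
definition "g x = gfun T \<kappa> \<eta> \<delta> x"

lemma der_t: "t \<in> {0..<T} \<Longrightarrow> ((\<lambda>s. \<theta> s x) has_real_derivative \<theta>t t x) (at t within {0..<T})"
  and der_x: "t \<in> {0..<T} \<Longrightarrow> ((\<lambda>y. \<theta> t y) has_real_derivative \<theta>x t x) (at x)"
  and der_xx: "t \<in> {0..<T} \<Longrightarrow> ((\<lambda>y. \<theta>x t y) has_real_derivative \<theta>xx t x) (at x)"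
  and pde: "t \<in> {0..<T} \<Longrightarrow> \<theta>t t x = wi t * \<theta> t x * \<theta>x t x - 1/2 * \<sigma>^2 * wi t * \<theta>xx t x"
  using der[of t x] by (auto simp: wi_def w_def algebra_simps)

lemma eta_cont: "continuous_on {0..T} \<eta>"
  unfolding continuous_on_eq_continuous_within
  using ric by (auto simp: riccati_sol_def intro: DERIV_continuous)

lemma w_cont: "continuous_on {0..T} w"
proof -
  have i: "(\<lambda>s. \<eta> s - \<kappa>) integrable_on {0..T}"
    by (intro integrable_continuous_real continuous_intros eta_cont)
  show ?thesis unfolding w_def[abs_def] wfun_def
    by (intro continuous_on_compose2[OF continuous_on_exp indefinite_integral_continuous_1'[OF i]]) auto
qed

lemma w_pos: "0 < w t" by (simp add: w_def wfun_def)

lemma wi_pos: "0 < wi t" using w_pos[of t] by (simp add: wi_def)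

lemma wi_cont: "continuous_on {0..T} wi"
proof -
  have "\<And>t. w t \<noteq> 0" using w_pos by (metis less_irrefl)
  then show ?thesis unfolding wi_def[abs_def] by (intro continuous_intros w_cont) auto
qed

definition "Wm = (SOME W. \<forall>t\<in>{0..T}. wi t \<le> W)"

lemma wi_bd: "t \<in> {0..T} \<Longrightarrow> wi t \<le> Wm"
proof -
  have "\<exists>W. \<forall>t\<in>{0..T}. wi t \<le> W"
    using continuous_attains_sup[OF compact_Icc _ wi_cont] T by fastforce
  then show "t \<in> {0..T} \<Longrightarrow> wi t \<le> Wm" unfolding Wm_def by (rule someI2_ex) auto
qed

lemma Wm_pos: "0 < Wm" using wi_bd[of 0] wi_pos[of 0] T by simp

lemma r_pos: "0 < r"
proof -
  have cont: "continuous_on {\<delta>..T} wi" by (rule continuous_on_subset[OF wi_cont]) (use \<delta> in auto)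
  obtain t0 where t0: "t0 \<in> {\<delta>..T}" "\<And>t. t \<in> {\<delta>..T} \<Longrightarrow> wi t0 \<le> wi t"
    using continuous_attains_inf[OF compact_Icc _ cont] \<delta> by fastforce
  have "integral {\<delta>..T} (\<lambda>s. wi t0) \<le> integral {\<delta>..T} wi"
    by (intro integral_le integrable_continuous_real cont continuous_intros t0(2)) auto
  moreover have "integral {\<delta>..T} (\<lambda>s. wi t0) = (T - \<delta>) * wi t0" using \<delta> by simp
  moreover have "0 < (T - \<delta>) * wi t0" using \<delta> wi_pos by simp
  ultimately have "0 < integral {\<delta>..T} wi" by linarith
  moreover have "integral {\<delta>..T} wi = r"
    by (simp add: r_def rfun_def wi_def[abs_def] w_def[abs_def])
  ultimately show ?thesis by simp
qed

lemma g_eq: "g x = max (-1) (min 1 (- x / r))"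
proof -
  have r: "0 < r" by (rule r_pos)
  have g: "g x = (if \<bar>x\<bar> \<le> r then - x / r else - sgn x)"
    by (simp add: g_def gfun_def r_def)
  show ?thesis
  proof (cases "\<bar>x\<bar> \<le> r")
    case True
    then have "-1 \<le> - x / r" "- x / r \<le> 1" using r by (auto simp: divide_simps abs_le_iff)
    then show ?thesis using True g by simp
  next
    case False
    show ?thesis
    proof (cases "x > 0")
      case True
      then have "- x / r < -1" using False r by (simp add: divide_simps)
      then show ?thesis using True False g by simp
    next
      case xn: False
      then have "x < 0" using False r by auto
      then have "1 < - x / r" using False r by (simp add: divide_simps)
      then show ?thesis using xn False g \<open>x < 0\<close> by simp
    qed
  qed
qed

lemma g_cont: "continuous_on UNIV g"
  unfolding g_eq[abs_def] using r_pos by (intro continuous_intros) auto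

lemma g_bd: "\<bar>g x\<bar> \<le> 1" unfolding g_eq by auto

lemma g_mono: "x \<le> y \<Longrightarrow> g y \<le> g x"
  unfolding g_eq using r_pos by (auto simp: divide_right_mono min.coboundedI2 max.coboundedI2)

lemma g_lip: "x \<le> y \<Longrightarrow> g x - g y \<le> (y - x) / r"
proof -
  assume xy: "x \<le> y"
  have "max (-1) (min 1 (- x / r)) - max (-1) (min 1 (- y / r)) \<le> (- x / r) - (- y / r)"
  proof -
    have "- y / r \<le> - x / r" using xy r_pos by (simp add: divide_right_mono)
    then show ?thesis by (auto simp: max_def min_def)
  qed
  then show ?thesis by (simp add: g_eq diff_divide_distrib)
qed

end


context sol begin

definition "U t x = prim (\<theta> t) x"
definition "F t x = wi t * (1/2 * (\<theta> t x)^2 - 1/2 * \<sigma>^2 * \<theta>x t x)"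
definition "G t = wi t * (1/2 * integral {0..1} (\<lambda>y. (\<theta> t y)^2) - 1/2 * \<sigma>^2 * (\<theta> t 1 - \<theta> t 0))"
definition "m t = integral {0..1} (U t)"
definition "\<psi> t = integral {0..t} G"
definition "V t x = U t x - m t + \<psi> t"

lemma th_cont_x: "t \<in> {0..T} \<Longrightarrow> continuous_on UNIV (\<theta> t)"
proof -
  assume t: "t \<in> {0..T}"
  have "continuous_on UNIV (\<lambda>y. (\<lambda>(t,x). \<theta> t x) (t, y))"
    by (rule continuous_on_compose2[OF c0]) (use t in \<open>auto intro!: continuous_intros\<close>)
  then show ?thesis by simp
qed

lemma tht_cont_x: "t \<in> {0..<T} \<Longrightarrow> continuous_on UNIV (\<theta>t t)"
proof -
  assume t: "t \<in> {0..<T}"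
  have "continuous_on UNIV (\<lambda>y. (\<lambda>(t,x). \<theta>t t x) (t, y))"
    by (rule continuous_on_compose2[OF ct]) (use t in \<open>auto intro!: continuous_intros\<close>)
  then show ?thesis by simp
qed

lemma thx_cont_x: "t \<in> {0..<T} \<Longrightarrow> continuous_on UNIV (\<theta>x t)"
proof -
  assume t: "t \<in> {0..<T}"
  have "continuous_on UNIV (\<lambda>y. (\<lambda>(t,x). \<theta>x t x) (t, y))"
    by (rule continuous_on_compose2[OF cx]) (use t in \<open>auto intro!: continuous_intros\<close>)
  then show ?thesis by simp
qed

lemma U_dx: "t \<in> {0..T} \<Longrightarrow> ((U t) has_real_derivative \<theta> t x) (at x)"
  unfolding U_def[abs_def] using prim_deriv[OF th_cont_x] by simp

lemma U_cont: "continuous_on ({0..T} \<times> UNIV) (\<lambda>(t,x). U t x)"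
proof -
  have c: "continuous_on (({0..T} \<times> UNIV) \<times> cbox 0 1) (\<lambda>(p, s). \<theta> (fst p) (s * snd p))"
  proof -
    have "continuous_on (({0..T} \<times> UNIV) \<times> cbox 0 1)
       (\<lambda>q. (\<lambda>(t,x). \<theta> t x) (fst (fst q), snd q * snd (fst q)))"
      by (rule continuous_on_compose2[OF c0]) (auto intro!: continuous_intros)
    then show ?thesis by (simp add: case_prod_beta)
  qed
  have "continuous_on ({0..T} \<times> UNIV) (\<lambda>p. integral (cbox 0 1) (\<lambda>s. \<theta> (fst p) (s * snd p)))"
    using integral_continuous_on_param[OF c] by simp
  then have "continuous_on ({0..T} \<times> UNIV) (\<lambda>p. snd p * integral {0..1} (\<lambda>s. \<theta> (fst p) (s * snd p)))"
    by (intro continuous_intros) auto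
  then show ?thesis by (simp add: U_def prim_def case_prod_beta)
qed

lemma U_bd: "t \<in> {0..T} \<Longrightarrow> \<bar>U t x\<bar> \<le> Bd * \<bar>x\<bar>"
proof -
  assume t: "t \<in> {0..T}"
  have cc: "continuous_on {0..1} (\<lambda>s. \<theta> t (s * x))"
    by (rule continuous_on_compose2[OF th_cont_x[OF t]]) (auto intro!: continuous_intros)
  have "norm (integral {0..1} (\<lambda>s. \<theta> t (s * x))) \<le> Bd * (1 - 0)"
    by (rule integral_bound) (use cc bd[OF t] in auto)
  then have "\<bar>integral {0..1} (\<lambda>s. \<theta> t (s * x))\<bar> \<le> Bd" by simp
  then have "\<bar>x\<bar> * \<bar>integral {0..1} (\<lambda>s. \<theta> t (s * x))\<bar> \<le> \<bar>x\<bar> * Bd"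
    by (rule mult_left_mono) simp
  then show ?thesis by (simp add: U_def prim_def abs_mult mult.commute)
qed

lemma F_dx: "t \<in> {0..<T} \<Longrightarrow> ((F t) has_real_derivative \<theta>t t y) (at y)"
proof -
  assume t: "t \<in> {0..<T}"
  have sq: "((\<lambda>y. (\<theta> t y)^2) has_real_derivative 2 * \<theta> t y * \<theta>x t y) (at y)"
    using DERIV_power[OF der_x[OF t], of 2 y] by (simp add: algebra_simps)
  have "((F t) has_real_derivative wi t * (1/2 * (2 * \<theta> t y * \<theta>x t y) - 1/2 * \<sigma>^2 * \<theta>xx t y)) (at y)"
    unfolding F_def[abs_def]
    by (intro DERIV_cmult DERIV_diff sq der_xx[OF t])
  moreover have "wi t * (1/2 * (2 * \<theta> t y * \<theta>x t y) - 1/2 * \<sigma>^2 * \<theta>xx t y) = \<theta>t t y"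
    using pde[OF t, of y] by (simp add: algebra_simps)
  ultimately show ?thesis by simp
qed

lemma U_dt: "t \<in> {0..<T} \<Longrightarrow> ((\<lambda>s. U s x) has_real_derivative F t x - F t 0) (at t within {0..<T})"
proof -
  assume t: "t \<in> {0..<T}"
  have cfx: "continuous_on ({0..<T} \<times> cbox 0 1) (\<lambda>(s, u). \<theta>t s (u * x))"
  proof -
    have "continuous_on ({0..<T} \<times> cbox 0 1) (\<lambda>q. (\<lambda>(t,x). \<theta>t t x) (fst q, snd q * x))"
      by (rule continuous_on_compose2[OF ct]) (auto intro!: continuous_intros)
    then show ?thesis by (simp add: case_prod_beta)
  qed
  have L: "((\<lambda>s. integral (cbox 0 1) (\<lambda>u. \<theta> s (u * x))) has_real_derivative
        integral (cbox 0 1) (\<lambda>u. \<theta>t t (u * x))) (at t within {0..<T})"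
  proof (rule leibniz_rule_field_derivative[OF _ _ cfx t])
    show "((\<lambda>s. \<theta> s (u * x)) has_field_derivative \<theta>t s (u * x)) (at s within {0..<T})"
      if "s \<in> {0..<T}" for s u using der_t[OF that] .
    show "(\<lambda>u. \<theta> s (u * x)) integrable_on cbox 0 1" if "s \<in> {0..<T}" for s
      using that by (intro integrable_continuous continuous_on_compose2[OF th_cont_x]) (auto intro!: continuous_intros)
    show "convex {0..<T}" by (rule convex_real_interval)
  qed
  have "((\<lambda>s. U s x) has_real_derivative x * integral {0..1} (\<lambda>u. \<theta>t t (u * x))) (at t within {0..<T})"
    using DERIV_cmult[OF L, of x] by (simp add: U_def prim_def)
  moreover have "x * integral {0..1} (\<lambda>u. \<theta>t t (u * x)) = F t x - F t 0"
    using prim_ftc[OF tht_cont_x[OF t] F_dx[OF t]] by (simp add: prim_def)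
  ultimately show ?thesis by simp
qed

end


context sol begin

lemma Bd_nonneg: "0 \<le> Bd" using bd[of 0 0] T by auto

lemma th_cont_sub: "S \<subseteq> {0..T} \<times> UNIV \<Longrightarrow> continuous_on S (\<lambda>p. \<theta> (fst p) (snd p))"
  using continuous_on_subset[OF c0] by (simp add: case_prod_beta)

lemma F_cont: "continuous_on ({0..<T} \<times> UNIV) (\<lambda>p. F (fst p) (snd p))"
proof -
  have c1: "continuous_on ({0..<T} \<times> UNIV) (\<lambda>p. \<theta> (fst p) (snd p))"
    by (rule th_cont_sub) auto
  have c2: "continuous_on ({0..<T} \<times> UNIV) (\<lambda>p. \<theta>x (fst p) (snd p))"
    using cx by (simp add: case_prod_beta)
  have c3: "continuous_on ({0..<T} \<times> UNIV) (\<lambda>p. wi (fst p))"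
    by (rule continuous_on_compose2[OF wi_cont]) (auto intro!: continuous_intros)
  show ?thesis unfolding F_def by (intro continuous_intros c1 c2 c3)
qed

lemma int_F: "t \<in> {0..<T} \<Longrightarrow> (F t has_integral G t) {0..1}"
proof -
  assume t: "t \<in> {0..<T}"
  have h1: "((\<lambda>y. (\<theta> t y)^2) has_integral integral {0..1} (\<lambda>y. (\<theta> t y)^2)) {0..1}"
    using t by (intro integrable_integral integrable_continuous_real continuous_intros
        continuous_on_subset[OF th_cont_x]) auto
  have h2: "(\<theta>x t has_integral (\<theta> t 1 - \<theta> t 0)) {0..1}"
    by (rule fundamental_theorem_of_calculus)
      (auto simp: has_real_derivative_iff_has_vector_derivative[symmetric]
        intro: has_field_derivative_at_within der_x[OF t])
  have "((\<lambda>y. wi t * (1/2 * (\<theta> t y)^2 - 1/2 * \<sigma>^2 * \<theta>x t y)) has_integral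
        wi t * (1/2 * integral {0..1} (\<lambda>y. (\<theta> t y)^2) - 1/2 * \<sigma>^2 * (\<theta> t 1 - \<theta> t 0))) {0..1}"
    by (intro has_integral_mult_right has_integral_diff h1 h2)
  then show ?thesis by (simp add: F_def[abs_def] G_def)
qed

lemma U_cont_x: "t \<in> {0..T} \<Longrightarrow> continuous_on S (U t)"
  using U_dx by (meson DERIV_isCont continuous_at_imp_continuous_on)

lemma m_cont: "continuous_on {0..T} m"
proof -
  have c: "continuous_on ({0..T} \<times> cbox 0 1) (\<lambda>(t, y). U t y)"
    by (rule continuous_on_subset[OF U_cont]) auto
  show ?thesis using integral_continuous_on_param[OF c] by (simp add: m_def[abs_def])
qed

lemma m_bd: "t \<in> {0..T} \<Longrightarrow> \<bar>m t\<bar> \<le> Bd"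
proof -
  assume t: "t \<in> {0..T}"
  have "norm (integral {0..1} (U t)) \<le> Bd * (1 - 0)"
  proof (rule integral_bound)
    show "continuous_on {0..1} (U t)" by (rule U_cont_x[OF t])
    fix y :: real assume "y \<in> {0..1}"
    then have "Bd * y \<le> Bd" using Bd_nonneg by (simp add: mult_left_le)
    then show "norm (U t y) \<le> Bd" using U_bd[OF t, of y] \<open>y \<in> {0..1}\<close> by simp
  qed simp
  then show ?thesis by (simp add: m_def)
qed

lemma m_dt: "t \<in> {0..<T} \<Longrightarrow> (m has_real_derivative G t - F t 0) (at t within {0..<T})"
proof -
  assume t: "t \<in> {0..<T}"
  have cfx: "continuous_on ({0..<T} \<times> cbox 0 1) (\<lambda>(s, y). F s y - F s 0)"
  proof -
    have a: "continuous_on ({0..<T} \<times> cbox 0 1) (\<lambda>p. F (fst p) (snd p))"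
      by (rule continuous_on_subset[OF F_cont]) auto
    have b: "continuous_on ({0..<T} \<times> cbox 0 1) (\<lambda>p. F (fst p) 0)"
      by (rule continuous_on_compose2[OF F_cont, where f="\<lambda>p. (fst p, 0)", simplified])
        (auto intro!: continuous_intros)
    show ?thesis using continuous_on_diff[OF a b] by (simp add: case_prod_beta)
  qed
  have L: "((\<lambda>s. integral (cbox 0 1) (U s)) has_real_derivative
        integral (cbox 0 1) (\<lambda>y. F t y - F t 0)) (at t within {0..<T})"
  proof (rule leibniz_rule_field_derivative[OF _ _ cfx t])
    show "((\<lambda>s. U s y) has_field_derivative F s y - F s 0) (at s within {0..<T})"
      if "s \<in> {0..<T}" for s y using U_dt[OF that] .
    show "U s integrable_on cbox 0 1" if "s \<in> {0..<T}" for s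
      using that by (intro integrable_continuous U_cont_x) auto
    show "convex {0..<T}" by (rule convex_real_interval)
  qed
  have "integral {0..1} (\<lambda>y. F t y - F t 0) = G t - F t 0"
  proof -
    have "((\<lambda>y. F t y - F t 0) has_integral (G t - F t 0 * 1)) {0..1}"
      by (intro has_integral_diff int_F[OF t]) (use has_integral_const_real[of "F t 0" 0 1] in simp)
    then show ?thesis by (simp add: integral_unique)
  qed
  then show ?thesis using L by (simp add: m_def[abs_def])
qed

lemma G_cont: "continuous_on {0..T} G"
proof -
  have c: "continuous_on ({0..T} \<times> cbox 0 1) (\<lambda>(t, y). (\<theta> t y)^2)"
  proof -
    have "continuous_on ({0..T} \<times> cbox 0 1) (\<lambda>p. (\<theta> (fst p) (snd p))^2)"
      by (intro continuous_intros th_cont_sub) auto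
    then show ?thesis by (simp add: case_prod_beta)
  qed
  have i: "continuous_on {0..T} (\<lambda>t. integral (cbox 0 1) (\<lambda>y. (\<theta> t y)^2))"
    using integral_continuous_on_param[OF c] by simp
  have e: "continuous_on {0..T} (\<lambda>t. \<theta> t a)" for a
  proof -
    have "continuous_on {0..T} (\<lambda>t. (\<lambda>(t,x). \<theta> t x) (t, a))"
      by (rule continuous_on_compose2[OF c0]) (auto intro!: continuous_intros)
    then show ?thesis by simp
  qed
  show ?thesis unfolding G_def[abs_def] using i by (intro continuous_intros wi_cont e) auto
qed

definition "Gb = Wm * (Bd^2 / 2 + Bd)"

lemma G_bd: "t \<in> {0..T} \<Longrightarrow> \<bar>G t\<bar> \<le> Gb"
proof -
  assume t: "t \<in> {0..T}"
  have "norm (integral {0..1} (\<lambda>y. (\<theta> t y)^2)) \<le> Bd^2 * (1 - 0)"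
  proof (rule integral_bound)
    show "continuous_on {0..1} (\<lambda>y. (\<theta> t y)^2)"
      by (intro continuous_intros continuous_on_subset[OF th_cont_x[OF t]]) auto
    fix y :: real assume "y \<in> {0..1}"
    have "\<bar>\<theta> t y\<bar>^2 \<le> Bd^2" using bd[OF t, of y] by (intro power_mono) auto
    then show "norm ((\<theta> t y)^2) \<le> Bd^2" by simp
  qed simp
  then have i: "\<bar>integral {0..1} (\<lambda>y. (\<theta> t y)^2)\<bar> \<le> Bd^2" by simp
  have d: "\<bar>\<theta> t 1 - \<theta> t 0\<bar> \<le> 2 * Bd" using bd[OF t, of 1] bd[OF t, of 0] by linarith
  have s2: "\<sigma>^2 \<le> 1" using \<sigma> by (simp add: power_le_one)
  have "\<bar>1/2 * \<sigma>^2 * (\<theta> t 1 - \<theta> t 0)\<bar> \<le> 1/2 * 1 * (2 * Bd)"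
    unfolding abs_mult using d s2 by (intro mult_mono) auto
  then have in1: "\<bar>1/2 * integral {0..1} (\<lambda>y. (\<theta> t y)^2) - 1/2 * \<sigma>^2 * (\<theta> t 1 - \<theta> t 0)\<bar> \<le> Bd^2/2 + Bd"
    using i by linarith
  have "\<bar>G t\<bar> = wi t * \<bar>1/2 * integral {0..1} (\<lambda>y. (\<theta> t y)^2) - 1/2 * \<sigma>^2 * (\<theta> t 1 - \<theta> t 0)\<bar>"
    using wi_pos[of t] by (simp add: G_def abs_mult)
  also have "\<dots> \<le> Wm * (Bd^2/2 + Bd)"
    using in1 wi_bd[OF t] wi_pos[of t] Bd_nonneg by (intro mult_mono) auto
  finally show ?thesis by (simp add: Gb_def)
qed

lemma psi_dt0: "t \<in> {0..T} \<Longrightarrow> (\<psi> has_real_derivative G t) (at t within {0..T})"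
  unfolding \<psi>_def[abs_def] by (rule integral_has_real_derivative[OF G_cont])

lemma psi_dt: "t \<in> {0..<T} \<Longrightarrow> (\<psi> has_real_derivative G t) (at t within {0..<T})"
  using psi_dt0[of t] by (rule has_field_derivative_subset) auto

lemma psi_cont: "continuous_on {0..T} \<psi>"
  unfolding continuous_on_eq_continuous_within using psi_dt0 DERIV_continuous by blast

lemma psi_bd: "t \<in> {0..T} \<Longrightarrow> \<bar>\<psi> t\<bar> \<le> Gb * T"
proof -
  assume t: "t \<in> {0..T}"
  have "norm (integral {0..t} G) \<le> Gb * (t - 0)"
    by (rule integral_bound) (use t G_bd in \<open>auto intro: continuous_on_subset[OF G_cont]\<close>)
  moreover have "Gb * t \<le> Gb * T" using t G_bd[of 0] T by (intro mult_left_mono) auto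
  ultimately show ?thesis by (simp add: \<psi>_def)
qed

lemma V_cont: "continuous_on ({0..T} \<times> UNIV) (\<lambda>p. V (fst p) (snd p))"
proof -
  have a: "continuous_on ({0..T} \<times> UNIV) (\<lambda>p. U (fst p) (snd p))"
    using U_cont by (simp add: case_prod_beta)
  have b: "continuous_on ({0..T} \<times> UNIV) (\<lambda>p. m (fst p))"
    by (rule continuous_on_compose2[OF m_cont]) (auto intro!: continuous_intros)
  have c: "continuous_on ({0..T} \<times> UNIV) (\<lambda>p. \<psi> (fst p))"
    by (rule continuous_on_compose2[OF psi_cont]) (auto intro!: continuous_intros)
  show ?thesis unfolding V_def by (intro continuous_intros a b c)
qed

lemma V_dt: "t \<in> {0..<T} \<Longrightarrow> ((\<lambda>s. V s x) has_real_derivative F t x) (at t within {0..<T})"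
proof -
  assume t: "t \<in> {0..<T}"
  have "((\<lambda>s. V s x) has_real_derivative (F t x - F t 0) - (G t - F t 0) + G t) (at t within {0..<T})"
    unfolding V_def by (intro DERIV_add DERIV_diff U_dt m_dt psi_dt t)
  then show ?thesis by simp
qed

lemma V_dx: "t \<in> {0..T} \<Longrightarrow> ((V t) has_real_derivative \<theta> t x) (at x)"
proof -
  assume t: "t \<in> {0..T}"
  have "((\<lambda>y. U t y - m t + \<psi> t) has_real_derivative \<theta> t x - 0 + 0) (at x)"
    by (intro DERIV_add DERIV_diff U_dx[OF t] DERIV_const)
  then show ?thesis by (simp add: V_def[abs_def])
qed

lemma V_lbd: "t \<in> {0..T} \<Longrightarrow> - V t x \<le> Bd * \<bar>x\<bar> + Bd + Gb * T"
  using U_bd[of t x] m_bd[of t] psi_bd[of t] unfolding V_def by linarith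

end


lemma aff_deriv:
  fixes f :: "real \<Rightarrow> real"
  assumes "(f has_real_derivative d) (at (c + s * y))"
  shows "((\<lambda>y. f (c + s * y)) has_real_derivative s * d) (at y)"
proof -
  have "((\<lambda>y. c + s * y) has_real_derivative s) (at y)"
    using DERIV_add[OF DERIV_const[of c] DERIV_cmult[OF DERIV_ident, of s]] by simp
  from DERIV_chain2[OF assms this] show ?thesis by (simp add: mult.commute)
qed

context sol begin

definition "\<Phi> t x = exp (- V t x / \<sigma>^2)"
definition "\<Phi>x t x = - \<theta> t x / \<sigma>^2 * \<Phi> t x"
definition "\<Phi>xx t x = ((\<theta> t x)^2 / (\<sigma>^2 * \<sigma>^2) - \<theta>x t x / \<sigma>^2) * \<Phi> t x"
definition "\<Phi>t t x = - F t x / \<sigma>^2 * \<Phi> t x"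
definition "a t = 1/2 * \<sigma>^2 * wi t"

lemma Phi_pos: "0 < \<Phi> t x" by (simp add: \<Phi>_def)

lemma Phi_cont: "continuous_on ({0..T} \<times> UNIV) (\<lambda>p. \<Phi> (fst p) (snd p))"
  unfolding \<Phi>_def using \<sigma> by (intro continuous_intros V_cont) auto

lemma Phi_dt: "t \<in> {0..<T} \<Longrightarrow> ((\<lambda>s. \<Phi> s x) has_real_derivative \<Phi>t t x) (at t within {0..<T})"
proof -
  assume t: "t \<in> {0..<T}"
  have "((\<lambda>s. exp (- V s x / \<sigma>^2)) has_real_derivative exp (- V t x / \<sigma>^2) * (- F t x / \<sigma>^2)) (at t within {0..<T})"
    by (intro DERIV_chain2[OF DERIV_exp] DERIV_cdivide DERIV_minus V_dt[OF t])
  then show ?thesis by (simp add: \<Phi>_def[abs_def] \<Phi>t_def mult.commute)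
qed

lemma Phi_dx: "t \<in> {0..T} \<Longrightarrow> ((\<Phi> t) has_real_derivative \<Phi>x t x) (at x)"
proof -
  assume t: "t \<in> {0..T}"
  have "((\<lambda>y. exp (- V t y / \<sigma>^2)) has_real_derivative exp (- V t x / \<sigma>^2) * (- \<theta> t x / \<sigma>^2)) (at x)"
    by (intro DERIV_chain2[OF DERIV_exp] DERIV_cdivide DERIV_minus V_dx[OF t])
  then show ?thesis by (simp add: \<Phi>_def[abs_def] \<Phi>x_def mult.commute)
qed

lemma Phi_dxx: "t \<in> {0..<T} \<Longrightarrow> ((\<Phi>x t) has_real_derivative \<Phi>xx t x) (at x)"
proof -
  assume t: "t \<in> {0..<T}"
  then have t': "t \<in> {0..T}" by auto
  have d1: "((\<lambda>y. - \<theta> t y / \<sigma>^2) has_real_derivative - \<theta>x t x / \<sigma>^2) (at x)"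
    by (intro DERIV_cdivide DERIV_minus der_x[OF t])
  have "((\<lambda>y. - \<theta> t y / \<sigma>^2 * \<Phi> t y) has_real_derivative
      (- \<theta>x t x / \<sigma>^2) * \<Phi> t x + (- \<theta> t x / \<sigma>^2) * \<Phi>x t x) (at x)"
    using DERIV_mult[OF d1 Phi_dx[OF t']] by (simp add: algebra_simps)
  moreover have "(- \<theta>x t x / \<sigma>^2) * \<Phi> t x + (- \<theta> t x / \<sigma>^2) * \<Phi>x t x = \<Phi>xx t x"
    using \<sigma> by (simp add: \<Phi>x_def \<Phi>xx_def field_simps power2_eq_square)
  ultimately show ?thesis by (simp add: \<Phi>x_def[abs_def])
qed

lemma Phi_pde: "t \<in> {0..<T} \<Longrightarrow> \<Phi>t t x + a t * \<Phi>xx t x = 0"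
  using \<sigma> by (simp add: \<Phi>t_def a_def \<Phi>xx_def F_def field_simps power2_eq_square)

lemma Phi_growth: "t \<in> {0..T} \<Longrightarrow> \<Phi> t y \<le> exp ((Bd * \<bar>y\<bar> + Bd + Gb * T) / \<sigma>^2)"
proof -
  assume t: "t \<in> {0..T}"
  have "- V t y / \<sigma>^2 \<le> (Bd * \<bar>y\<bar> + Bd + Gb * T) / \<sigma>^2"
    using divide_right_mono[OF V_lbd[OF t, of y], of "\<sigma>^2"] by simp
  then show ?thesis by (simp add: \<Phi>_def)
qed

definition "c0' = Bd + Gb * T"

lemma Phi_growth': "t \<in> {0..T} \<Longrightarrow> \<Phi> t (x + s) \<le> exp ((Bd * \<bar>s\<bar> + c0') / \<sigma>^2) * exp (Bd / \<sigma>^2 * \<bar>x\<bar>)"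
proof -
  assume t: "t \<in> {0..T}"
  have "Bd * \<bar>x + s\<bar> \<le> Bd * \<bar>x\<bar> + Bd * \<bar>s\<bar>"
    using Bd_nonneg abs_triangle_ineq[of x s] by (metis distrib_left mult_left_mono)
  then have "(Bd * \<bar>x + s\<bar> + Bd + Gb * T) / \<sigma>^2 \<le> (Bd * \<bar>s\<bar> + c0') / \<sigma>^2 + Bd / \<sigma>^2 * \<bar>x\<bar>"
    using \<sigma> by (simp add: c0'_def divide_right_mono add_divide_distrib[symmetric] algebra_simps)
  then have "exp ((Bd * \<bar>x + s\<bar> + Bd + Gb * T) / \<sigma>^2) \<le> exp ((Bd * \<bar>s\<bar> + c0') / \<sigma>^2 + Bd / \<sigma>^2 * \<bar>x\<bar>)"
    by simp
  then show ?thesis using Phi_growth[OF t, of "x + s"] by (simp add: exp_add)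
qed

lemma comb_MP:
  assumes termc: "\<And>x. c1 * \<Phi> T (x + h) + c2 * \<Phi> T (x - h) + c3 * \<Phi> T x \<le> 0"
    and t: "t \<in> {0..T}"
  shows "c1 * \<Phi> t (x + h) + c2 * \<Phi> t (x - h) + c3 * \<Phi> t x \<le> 0"
proof -
  define D where "D t x = c1 * \<Phi> t (x + h) + c2 * \<Phi> t (x - h) + c3 * \<Phi> t x" for t x
  define M where "M = (\<bar>c1\<bar> + \<bar>c2\<bar> + \<bar>c3\<bar>) * exp ((Bd * \<bar>h\<bar> + c0') / \<sigma>^2)"
  have dsh: "((\<lambda>y. f (y + s)) has_real_derivative d) (at y)" if "(f has_real_derivative d) (at (y + s))" for f d y s
    using aff_deriv[of f d s 1 y] that by (simp add: add.commute)
  have "D t x \<le> 0"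
  proof (rule max_principle[where D = D and a = a and A = "1/2 * \<sigma>^2 * Wm"
        and M = M and k = "Bd / \<sigma>^2"
        and Dt = "\<lambda>t x. c1 * \<Phi>t t (x + h) + c2 * \<Phi>t t (x - h) + c3 * \<Phi>t t x"
        and Dx = "\<lambda>t x. c1 * \<Phi>x t (x + h) + c2 * \<Phi>x t (x - h) + c3 * \<Phi>x t x"
        and Dxx = "\<lambda>t x. c1 * \<Phi>xx t (x + h) + c2 * \<Phi>xx t (x - h) + c3 * \<Phi>xx t x"])
    show "0 < T" by (rule T)
    show "t \<in> {0..T}" by (rule t)
    show "D T x \<le> 0" for x using termc by (simp add: D_def)
    show "continuous_on ({0..T} \<times> UNIV) (\<lambda>(t, x). D t x)"
    proof -
      have s: "continuous_on ({0..T} \<times> UNIV) (\<lambda>p. \<Phi> (fst p) (snd p + s))" for s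
        by (rule continuous_on_compose2[OF Phi_cont, where f="\<lambda>p. (fst p, snd p + s)", simplified])
          (auto intro!: continuous_intros)
      have "continuous_on ({0..T} \<times> UNIV) (\<lambda>p. D (fst p) (snd p))"
        unfolding D_def using s[of h] s[of "-h"] s[of 0] by (intro continuous_intros) auto
      then show ?thesis by (simp add: case_prod_beta)
    qed
    show "((\<lambda>s. D s x) has_real_derivative c1 * \<Phi>t t (x + h) + c2 * \<Phi>t t (x - h) + c3 * \<Phi>t t x)
        (at t within {0..<T})" if "t \<in> {0..<T}" for t x
      unfolding D_def by (intro DERIV_add DERIV_cmult Phi_dt that)
    show "((\<lambda>y. D t y) has_real_derivative c1 * \<Phi>x t (y + h) + c2 * \<Phi>x t (y - h) + c3 * \<Phi>x t y) (at y)"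
      if "t \<in> {0..<T}" for t x y
    proof -
      have t': "t \<in> {0..T}" using that by auto
      have e1: "((\<lambda>y. \<Phi> t (y + h)) has_real_derivative \<Phi>x t (y + h)) (at y)"
        using dsh[of "\<Phi> t" "\<Phi>x t (y + h)" y h] Phi_dx[OF t'] by simp
      have e2: "((\<lambda>y. \<Phi> t (y - h)) has_real_derivative \<Phi>x t (y - h)) (at y)"
        using dsh[of "\<Phi> t" "\<Phi>x t (y - h)" y "-h"] Phi_dx[OF t'] by simp
      show ?thesis unfolding D_def
        by (intro DERIV_add DERIV_cmult Phi_dx t' e1 e2)
    qed
    show "((\<lambda>y. c1 * \<Phi>x t (y + h) + c2 * \<Phi>x t (y - h) + c3 * \<Phi>x t y) has_real_derivative
        c1 * \<Phi>xx t (x + h) + c2 * \<Phi>xx t (x - h) + c3 * \<Phi>xx t x) (at x)" if "t \<in> {0..<T}" for t x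
    proof -
      have e1: "((\<lambda>y. \<Phi>x t (y + h)) has_real_derivative \<Phi>xx t (x + h)) (at x)"
        using dsh[of "\<Phi>x t" "\<Phi>xx t (x + h)" x h] Phi_dxx[OF that] by simp
      have e2: "((\<lambda>y. \<Phi>x t (y - h)) has_real_derivative \<Phi>xx t (x - h)) (at x)"
        using dsh[of "\<Phi>x t" "\<Phi>xx t (x - h)" x "-h"] Phi_dxx[OF that] by simp
      show ?thesis by (intro DERIV_add DERIV_cmult Phi_dxx that e1 e2)
    qed
    show "c1 * \<Phi>t t (x + h) + c2 * \<Phi>t t (x - h) + c3 * \<Phi>t t x +
        a t * (c1 * \<Phi>xx t (x + h) + c2 * \<Phi>xx t (x - h) + c3 * \<Phi>xx t x) = 0" if "t \<in> {0..<T}" for t x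
    proof -
      have "c1 * \<Phi>t t (x + h) + c2 * \<Phi>t t (x - h) + c3 * \<Phi>t t x +
        a t * (c1 * \<Phi>xx t (x + h) + c2 * \<Phi>xx t (x - h) + c3 * \<Phi>xx t x)
        = c1 * (\<Phi>t t (x + h) + a t * \<Phi>xx t (x + h)) + c2 * (\<Phi>t t (x - h) + a t * \<Phi>xx t (x - h))
          + c3 * (\<Phi>t t x + a t * \<Phi>xx t x)" by (simp add: algebra_simps)
      then show ?thesis using Phi_pde[OF that] by simp
    qed
    show "0 \<le> a t" for t using wi_pos[of t] by (simp add: a_def)
    show "a t \<le> 1/2 * \<sigma>^2 * Wm" if "t \<in> {0..<T}" for t
      using wi_bd[of t] that by (auto simp: a_def intro!: mult_left_mono)
    show "D t x \<le> M * exp (Bd / \<sigma>^2 * \<bar>x\<bar>)" if "t \<in> {0..T}" for t x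
    proof -
      define E where "E = exp ((Bd * \<bar>h\<bar> + c0') / \<sigma>^2) * exp (Bd / \<sigma>^2 * \<bar>x\<bar>)"
      have b1: "\<Phi> t (x + h) \<le> E" using Phi_growth'[OF that, of x h] by (simp add: E_def)
      have b2: "\<Phi> t (x - h) \<le> E" using Phi_growth'[OF that, of x "-h"] by (simp add: E_def)
      have b3: "\<Phi> t x \<le> E"
      proof -
        have "\<Phi> t (x + 0) \<le> exp ((Bd * \<bar>0\<bar> + c0') / \<sigma>^2) * exp (Bd / \<sigma>^2 * \<bar>x\<bar>)"
          by (rule Phi_growth'[OF that])
        also have "\<dots> \<le> E" unfolding E_def using Bd_nonneg \<sigma>
          by (intro mult_right_mono) (auto simp: divide_right_mono)
        finally show ?thesis by simp
      qed
      have "c * \<Phi> t y \<le> \<bar>c\<bar> * E" if "\<Phi> t y \<le> E" for c y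
      proof -
        have "c * \<Phi> t y \<le> \<bar>c\<bar> * \<Phi> t y" using Phi_pos[of t y] by (intro mult_right_mono) auto
        also have "\<dots> \<le> \<bar>c\<bar> * E" using that by (intro mult_left_mono) auto
        finally show ?thesis .
      qed
      then have "D t x \<le> \<bar>c1\<bar> * E + \<bar>c2\<bar> * E + \<bar>c3\<bar> * E"
        unfolding D_def using b1 b2 b3 by (meson add_mono)
      then show ?thesis by (simp add: M_def E_def algebra_simps)
    qed
  qed
  then show ?thesis by (simp add: D_def)
qed

end


lemma exp_quad:
  fixes y :: real assumes "\<bar>y\<bar> \<le> 1" shows "exp y \<le> 1 + y + y^2"
proof (cases "0 \<le> y")
  case True then show ?thesis using exp_bound[of y] assms by simp
next
  case False
  then have y: "y < 0" by simp
  have "1 - y \<le> exp (- y)" using exp_ge_add_one_self[of "-y"] by simp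
  then have "exp y * (1 - y) \<le> exp y * exp (-y)" by (intro mult_left_mono) auto
  then have "exp y * (1 - y) \<le> 1" by (simp add: exp_minus)
  moreover have "1 \<le> (1 + y + y^2) * (1 - y)"
  proof -
    have "(1 + y + y^2) * (1 - y) = 1 - y^3" by (simp add: algebra_simps power2_eq_square power3_eq_cube)
    moreover have "y^3 \<le> 0" using y by (simp add: power3_eq_cube mult_nonneg_nonpos mult_neg_neg less_imp_le)
    ultimately show ?thesis by simp
  qed
  ultimately have "exp y * (1 - y) \<le> (1 + y + y^2) * (1 - y)" by linarith
  then show ?thesis using y by (simp add: mult_le_cancel_right)
qed

lemma lip1:
  fixes f :: "real \<Rightarrow> real"
  assumes d: "\<And>z. (f has_real_derivative f' z) (at z)" and b: "\<And>z. \<bar>f' z\<bar> \<le> 1"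
  shows "f x - f y \<le> \<bar>x - y\<bar>"
proof -
  have A: "f v - f u \<le> v - u" if "u \<le> v" for u v
  proof -
    have "(\<lambda>z. z - f z) u \<le> (\<lambda>z. z - f z) v"
    proof (rule DERIV_nonneg_imp_nondecreasing[OF that])
      fix z show "\<exists>y. ((\<lambda>z. z - f z) has_real_derivative y) (at z) \<and> 0 \<le> y"
        using DERIV_diff[OF DERIV_ident d[of z]] b[of z] by (intro exI[of _ "1 - f' z"]) auto
    qed
    then show ?thesis by simp
  qed
  have B: "f u - f v \<le> v - u" if "u \<le> v" for u v
  proof -
    have "(\<lambda>z. z + f z) u \<le> (\<lambda>z. z + f z) v"
    proof (rule DERIV_nonneg_imp_nondecreasing[OF that])
      fix z show "\<exists>y. ((\<lambda>z. z + f z) has_real_derivative y) (at z) \<and> 0 \<le> y"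
        using DERIV_add[OF DERIV_ident d[of z]] b[of z] by (intro exI[of _ "1 + f' z"]) auto
    qed
    then show ?thesis by simp
  qed
  show ?thesis
  proof (cases "y \<le> x")
    case True then show ?thesis using A[OF True] by simp
  next
    case False then show ?thesis using B[of x y] by simp
  qed
qed

context sol begin

definition "u = U T"

lemma u_d: "(u has_real_derivative g x) (at x)"
  using U_dx[of T x] T by (simp add: u_def termi g_def)

lemma u_lip: "u x - u y \<le> \<bar>x - y\<bar>"
  by (rule lip1[OF u_d g_bd])

lemma u_second_pos:
  assumes h: "0 \<le> h"
  shows "u (x + h) + u (x - h) - 2 * u x \<le> 0" and "-(h^2) / r \<le> u (x + h) + u (x - h) - 2 * u x"
proof -
  define \<phi> where "\<phi> s = u (x + s) + u (x - s) - 2 * u x" for s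
  have d\<phi>: "(\<phi> has_real_derivative g (x + s) - g (x - s)) (at s)" for s
  proof -
    have a: "((\<lambda>s. u (x + 1 * s)) has_real_derivative 1 * g (x + 1 * s)) (at s)" by (rule aff_deriv[OF u_d])
    have b: "((\<lambda>s. u (x + (-1) * s)) has_real_derivative (-1) * g (x + (-1) * s)) (at s)" by (rule aff_deriv[OF u_d])
    show ?thesis using DERIV_diff[OF DERIV_add[OF a b] DERIV_const[of "2 * u x"]] by (simp add: \<phi>_def[abs_def])
  qed
  have "\<phi> h \<le> \<phi> 0"
    by (rule deriv_nonpos_imp_antimono[OF d\<phi> _ h]) (use g_mono in auto)
  then show "u (x + h) + u (x - h) - 2 * u x \<le> 0" by (simp add: \<phi>_def)
  have "(\<lambda>s. \<phi> s + s^2 / r) 0 \<le> (\<lambda>s. \<phi> s + s^2 / r) h"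
  proof (rule DERIV_nonneg_imp_nondecreasing[OF h])
    fix s assume s: "0 \<le> s" "s \<le> h"
    have "((\<lambda>s. \<phi> s + s^2 / r) has_real_derivative (g (x + s) - g (x - s)) + 2 * s / r) (at s)"
    proof -
      have sq: "((\<lambda>s. s^2 / r) has_real_derivative 2 * s / r) (at s)"
        using DERIV_cdivide[OF DERIV_power[OF DERIV_ident, of 2 s], of r] by simp
      show ?thesis using DERIV_add[OF d\<phi> sq] by simp
    qed
    moreover have "0 \<le> (g (x + s) - g (x - s)) + 2 * s / r"
      using g_lip[of "x - s" "x + s"] s by simp
    ultimately show "\<exists>y. ((\<lambda>s. \<phi> s + s^2 / r) has_real_derivative y) (at s) \<and> 0 \<le> y" by blast
  qed
  then show "-(h^2) / r \<le> u (x + h) + u (x - h) - 2 * u x" by (simp add: \<phi>_def)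
qed

lemma u_second:
  shows "u (x + h) + u (x - h) - 2 * u x \<le> 0" and "-(h^2) / r \<le> u (x + h) + u (x - h) - 2 * u x"
proof -
  have "u (x + h) + u (x - h) - 2 * u x \<le> 0 \<and> -(h^2) / r \<le> u (x + h) + u (x - h) - 2 * u x"
  proof (cases "0 \<le> h")
    case True then show ?thesis using u_second_pos[OF True] by simp
  next
    case False
    then have "0 \<le> -h" by simp
    from u_second_pos[OF this, of x] show ?thesis by (simp add: algebra_simps)
  qed
  then show "u (x + h) + u (x - h) - 2 * u x \<le> 0" and "-(h^2) / r \<le> u (x + h) + u (x - h) - 2 * u x"
    by auto
qed

definition "P = exp ((m T - \<psi> T) / \<sigma>^2)"
definition "Eu y = exp (- u y / \<sigma>^2)"

lemma Phi_T: "\<Phi> T y = P * Eu y"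
  by (simp add: \<Phi>_def V_def P_def Eu_def u_def exp_add[symmetric] diff_divide_distrib add_divide_distrib)

lemma P_pos: "0 < P" by (simp add: P_def)

lemma Eu_shift: "Eu (x + h) = Eu x * exp (- ((u (x + h) - u x) / \<sigma>^2))"
  by (simp add: Eu_def exp_add[symmetric] diff_divide_distrib)

lemma term1: "1 * \<Phi> T (x + h) + 0 * \<Phi> T (x - h) + (- exp (\<bar>h\<bar> / \<sigma>^2)) * \<Phi> T x \<le> 0"
proof -
  have "u x - u (x + h) \<le> \<bar>h\<bar>" using u_lip[of x "x + h"] by simp
  then have "- u (x + h) / \<sigma>^2 \<le> \<bar>h\<bar> / \<sigma>^2 + - u x / \<sigma>^2"
    using divide_right_mono[of "u x - u (x + h)" "\<bar>h\<bar>" "\<sigma>^2"] by (simp add: diff_divide_distrib)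
  then have "Eu (x + h) \<le> exp (\<bar>h\<bar> / \<sigma>^2) * Eu x" by (simp add: Eu_def exp_add[symmetric])
  then have "P * Eu (x + h) \<le> P * (exp (\<bar>h\<bar> / \<sigma>^2) * Eu x)" using P_pos by (intro mult_left_mono) auto
  then show ?thesis by (simp add: Phi_T algebra_simps)
qed

lemma term2: "(-1) * \<Phi> T (x + h) + (-1) * \<Phi> T (x - h) + 2 * \<Phi> T x \<le> 0"
proof -
  define p where "p = (u (x + h) - u x) / \<sigma>^2"
  define q where "q = (u (x - h) - u x) / \<sigma>^2"
  have pq: "p + q \<le> 0" using u_second(1)[of x h] \<sigma>
    by (simp add: p_def q_def add_divide_distrib[symmetric] divide_nonpos_pos algebra_simps)
  have e1: "Eu (x + h) = Eu x * exp (- p)" by (simp add: Eu_shift p_def)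
  have e2: "Eu (x - h) = Eu x * exp (- q)" using Eu_shift[of x "-h"] by (simp add: q_def)
  have "1 - p \<le> exp (-p)" "1 - q \<le> exp (-q)" using exp_ge_add_one_self[of "-p"] exp_ge_add_one_self[of "-q"] by simp_all
  then have "2 \<le> exp (-p) + exp (-q)" using pq by linarith
  then have "Eu x * 2 \<le> Eu x * (exp (-p) + exp (-q))" by (intro mult_left_mono) (auto simp: Eu_def)
  then have "2 * Eu x \<le> Eu (x + h) + Eu (x - h)" using e1 e2 by (simp add: algebra_simps)
  then have "P * (2 * Eu x) \<le> P * (Eu (x + h) + Eu (x - h))" using P_pos by (intro mult_left_mono) auto
  then show ?thesis by (simp add: Phi_T algebra_simps)
qed

definition "K' = 1 / (r * \<sigma>^2) + 2 / (\<sigma>^2 * \<sigma>^2)"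

lemma term3:
  assumes h: "\<bar>h\<bar> \<le> \<sigma>^2"
  shows "1 * \<Phi> T (x + h) + 1 * \<Phi> T (x - h) + (- (2 + K' * h^2)) * \<Phi> T x \<le> 0"
proof -
  define p where "p = (u (x + h) - u x) / \<sigma>^2"
  define q where "q = (u (x - h) - u x) / \<sigma>^2"
  have s2: "0 < \<sigma>^2" using \<sigma> by simp
  have pq: "- (h^2 / (r * \<sigma>^2)) \<le> p + q" using divide_right_mono[OF u_second(2)[of h x], of "\<sigma>^2"] s2
    by (simp add: p_def q_def add_divide_distrib[symmetric] algebra_simps)
  have pb: "\<bar>p\<bar> \<le> \<bar>h\<bar> / \<sigma>^2"
    using u_lip[of "x + h" x] u_lip[of x "x + h"] s2 by (simp add: p_def abs_le_iff divide_right_mono)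
  have qb: "\<bar>q\<bar> \<le> \<bar>h\<bar> / \<sigma>^2"
    using u_lip[of "x - h" x] u_lip[of x "x - h"] s2 by (simp add: q_def abs_le_iff divide_right_mono)
  have h1: "\<bar>h\<bar> / \<sigma>^2 \<le> 1" using h s2 by simp
  have p2: "p^2 \<le> h^2 / (\<sigma>^2 * \<sigma>^2)"
  proof -
    have "\<bar>p\<bar>^2 \<le> (\<bar>h\<bar> / \<sigma>^2)^2" using pb by (intro power_mono) auto
    then show ?thesis by (simp add: power_divide power2_eq_square)
  qed
  have q2: "q^2 \<le> h^2 / (\<sigma>^2 * \<sigma>^2)"
  proof -
    have "\<bar>q\<bar>^2 \<le> (\<bar>h\<bar> / \<sigma>^2)^2" using qb by (intro power_mono) auto
    then show ?thesis by (simp add: power_divide power2_eq_square)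
  qed
  have "exp (-p) \<le> 1 + (-p) + (-p)^2" using pb h1 by (intro exp_quad) simp
  moreover have "exp (-q) \<le> 1 + (-q) + (-q)^2" using qb h1 by (intro exp_quad) simp
  ultimately have "exp (-p) + exp (-q) \<le> 2 - (p + q) + p^2 + q^2" by simp
  also have "\<dots> \<le> 2 + h^2 / (r * \<sigma>^2) + 2 * (h^2 / (\<sigma>^2 * \<sigma>^2))" using pq p2 q2 by linarith
  also have "\<dots> = 2 + K' * h^2" by (simp add: K'_def algebra_simps)
  finally have ee: "exp (-p) + exp (-q) \<le> 2 + K' * h^2" .
  have e1: "Eu (x + h) = Eu x * exp (- p)" by (simp add: Eu_shift p_def)
  have e2: "Eu (x - h) = Eu x * exp (- q)" using Eu_shift[of x "-h"] by (simp add: q_def)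
  have "Eu x * (exp (-p) + exp (-q)) \<le> Eu x * (2 + K' * h^2)" using ee by (intro mult_left_mono) (auto simp: Eu_def)
  then have "Eu (x + h) + Eu (x - h) \<le> (2 + K' * h^2) * Eu x" using e1 e2 by (simp add: algebra_simps)
  then have "P * (Eu (x + h) + Eu (x - h)) \<le> P * ((2 + K' * h^2) * Eu x)" using P_pos by (intro mult_left_mono) auto
  then show ?thesis by (simp add: Phi_T algebra_simps)
qed

end


context sol begin

lemma th_bd1:
  assumes t: "t \<in> {0..<T}"
  shows "-1 \<le> \<theta> t x \<and> \<theta> t x \<le> 1"
proof -
  have t': "t \<in> {0..T}" using t by auto
  have mp1: "\<Phi> t (x + h) - \<Phi> t x * exp (\<bar>h\<bar> / \<sigma>^2) \<le> 0" for h
    using comb_MP[OF term1 t', of x h] by (simp add: algebra_simps)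
  have s2: "0 < \<sigma>^2" using \<sigma> by simp
  have Ps: "0 < \<Phi> t x / \<sigma>^2" using Phi_pos[of t x] s2 by simp
  have d1: "((\<lambda>h. \<Phi> t (x + 1 * h) - \<Phi> t x * exp (h / \<sigma>^2)) has_real_derivative
           1 * \<Phi>x t (x + 1 * 0) - \<Phi> t x * (exp (0 / \<sigma>^2) * (1 / \<sigma>^2))) (at 0)"
    by (intro DERIV_diff aff_deriv Phi_dx[OF t'] DERIV_cmult DERIV_chain2[OF DERIV_exp]
        DERIV_cdivide[OF DERIV_ident, simplified])
  have "1 * \<Phi>x t (x + 1 * 0) - \<Phi> t x * (exp (0 / \<sigma>^2) * (1 / \<sigma>^2)) \<le> 0"
  proof (rule right_max_deriv[OF d1, of 1])
    fix h :: real assume h: "0 < h" "h < 1"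
    show "0 + h \<in> UNIV" by simp
    show "\<Phi> t (x + 1 * (0 + h)) - \<Phi> t x * exp ((0 + h) / \<sigma>^2)
        \<le> \<Phi> t (x + 1 * 0) - \<Phi> t x * exp (0 / \<sigma>^2)"
      using mp1[of h] h by simp
  qed simp
  moreover have "1 * \<Phi>x t (x + 1 * 0) - \<Phi> t x * (exp (0 / \<sigma>^2) * (1 / \<sigma>^2)) = (- \<theta> t x - 1) * (\<Phi> t x / \<sigma>^2)"
    using s2 by (simp add: \<Phi>x_def field_simps)
  ultimately have n1: "(- \<theta> t x - 1) * (\<Phi> t x / \<sigma>^2) \<le> 0" by simp
  have A: "-1 \<le> \<theta> t x"
  proof (rule ccontr)
    assume "\<not> -1 \<le> \<theta> t x"
    then have "0 < - \<theta> t x - 1" by simp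
    then have "0 < (- \<theta> t x - 1) * (\<Phi> t x / \<sigma>^2)" using Ps by (rule mult_pos_pos)
    then show False using n1 by linarith
  qed
  have d2: "((\<lambda>h. \<Phi> t (x + (-1) * h) - \<Phi> t x * exp (h / \<sigma>^2)) has_real_derivative
           (-1) * \<Phi>x t (x + (-1) * 0) - \<Phi> t x * (exp (0 / \<sigma>^2) * (1 / \<sigma>^2))) (at 0)"
    by (intro DERIV_diff aff_deriv Phi_dx[OF t'] DERIV_cmult DERIV_chain2[OF DERIV_exp]
        DERIV_cdivide[OF DERIV_ident, simplified])
  have "(-1) * \<Phi>x t (x + (-1) * 0) - \<Phi> t x * (exp (0 / \<sigma>^2) * (1 / \<sigma>^2)) \<le> 0"
  proof (rule right_max_deriv[OF d2, of 1])
    fix h :: real assume h: "0 < h" "h < 1"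
    show "0 + h \<in> UNIV" by simp
    show "\<Phi> t (x + (-1) * (0 + h)) - \<Phi> t x * exp ((0 + h) / \<sigma>^2)
        \<le> \<Phi> t (x + (-1) * 0) - \<Phi> t x * exp (0 / \<sigma>^2)"
      using mp1[of "-h"] h by simp
  qed simp
  moreover have "(-1) * \<Phi>x t (x + (-1) * 0) - \<Phi> t x * (exp (0 / \<sigma>^2) * (1 / \<sigma>^2)) = (\<theta> t x - 1) * (\<Phi> t x / \<sigma>^2)"
    using s2 by (simp add: \<Phi>x_def field_simps)
  ultimately have n2: "(\<theta> t x - 1) * (\<Phi> t x / \<sigma>^2) \<le> 0" by simp
  have B: "\<theta> t x \<le> 1"
  proof (rule ccontr)
    assume "\<not> \<theta> t x \<le> 1"
    then have "0 < \<theta> t x - 1" by simp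
    then have "0 < (\<theta> t x - 1) * (\<Phi> t x / \<sigma>^2)" using Ps by (rule mult_pos_pos)
    then show False using n2 by linarith
  qed
  show ?thesis using A B by simp
qed

lemma Phixx_nonneg:
  assumes t: "t \<in> {0..<T}"
  shows "0 \<le> \<Phi>xx t x"
proof -
  have t': "t \<in> {0..T}" using t by auto
  define q where "q h = (-1) * \<Phi> t (x + 1 * h) + (-1) * \<Phi> t (x + (-1) * h) + 2 * \<Phi> t x" for h
  define q' where "q' h = (-1) * (1 * \<Phi>x t (x + 1 * h)) + (-1) * ((-1) * \<Phi>x t (x + (-1) * h)) + 2 * 0" for h
  have "(-1) * (1 * (1 * \<Phi>xx t (x + 1 * 0))) + (-1) * ((-1) * ((-1) * \<Phi>xx t (x + (-1) * 0))) + 0 \<le> 0"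
  proof (rule second_deriv_max[where f = q and f' = q' and \<rho> = 1])
    show "(q has_real_derivative q' y) (at y)" for y
      unfolding q_def[abs_def] q'_def
      apply (rule DERIV_add)
      apply (rule DERIV_add)
      apply (rule DERIV_cmult, rule aff_deriv, rule Phi_dx[OF t'])
      apply (rule DERIV_cmult, rule aff_deriv, rule Phi_dx[OF t'])
      apply (rule DERIV_cmult, rule DERIV_const)
      done
    show "(q' has_real_derivative (-1) * (1 * (1 * \<Phi>xx t (x + 1 * 0))) + (-1) * ((-1) * ((-1) * \<Phi>xx t (x + (-1) * 0))) + 0) (at 0)"
      unfolding q'_def[abs_def]
      apply (rule DERIV_add)
      apply (rule DERIV_add)
      apply (rule DERIV_cmult, rule DERIV_cmult, rule aff_deriv, rule Phi_dxx[OF t])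
      apply (rule DERIV_cmult, rule DERIV_cmult, rule aff_deriv, rule Phi_dxx[OF t])
      apply (rule DERIV_const)
      done
    fix y :: real
    have "q y \<le> 0" using comb_MP[OF term2 t', of x y] by (simp add: q_def)
    then show "q y \<le> q 0" by (simp add: q_def)
  qed simp
  then show ?thesis by simp
qed

lemma Phixx_upper:
  assumes t: "t \<in> {0..<T}"
  shows "\<Phi>xx t x \<le> K' * \<Phi> t x"
proof -
  have t': "t \<in> {0..T}" using t by auto
  have s2: "0 < \<sigma>^2" using \<sigma> by simp
  define q where "q h = \<Phi> t (x + 1 * h) + \<Phi> t (x + (-1) * h) - 2 * \<Phi> t x - K' * \<Phi> t x * (h * h)" for h
  define q' where "q' h = 1 * \<Phi>x t (x + 1 * h) + (-1) * \<Phi>x t (x + (-1) * h) - 2 * 0 - K' * \<Phi> t x * (1 * h + 1 * h)" for h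
  have "1 * (1 * \<Phi>xx t (x + 1 * 0)) + (-1) * ((-1) * \<Phi>xx t (x + (-1) * 0)) - 0 - K' * \<Phi> t x * (1 * 1 + 1 * 1) \<le> 0"
  proof (rule second_deriv_max[where f = q and f' = q' and \<rho> = "\<sigma>^2"])
    show "(q has_real_derivative q' y) (at y)" for y
      unfolding q_def[abs_def] q'_def
      apply (rule DERIV_diff)
      apply (rule DERIV_diff)
      apply (rule DERIV_add)
      apply (rule aff_deriv, rule Phi_dx[OF t'])
      apply (rule aff_deriv, rule Phi_dx[OF t'])
      apply (rule DERIV_cmult, rule DERIV_const)
      apply (rule DERIV_cmult, rule DERIV_mult, rule DERIV_ident, rule DERIV_ident)
      done
    show "(q' has_real_derivative 1 * (1 * \<Phi>xx t (x + 1 * 0)) + (-1) * ((-1) * \<Phi>xx t (x + (-1) * 0)) - 0 - K' * \<Phi> t x * (1 * 1 + 1 * 1)) (at 0)"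
      unfolding q'_def[abs_def]
      apply (rule DERIV_diff)
      apply (rule DERIV_diff)
      apply (rule DERIV_add)
      apply (rule DERIV_cmult, rule aff_deriv, rule Phi_dxx[OF t])
      apply (rule DERIV_cmult, rule aff_deriv, rule Phi_dxx[OF t])
      apply (rule DERIV_const)
      apply (rule DERIV_cmult, rule DERIV_add)
      apply (rule DERIV_cmult, rule DERIV_ident)
      apply (rule DERIV_cmult, rule DERIV_ident)
      done
    show "0 < \<sigma>^2" by (rule s2)
    fix y :: real assume y: "\<bar>y - 0\<bar> < \<sigma>^2"
    have "q y \<le> 0" using comb_MP[OF term3 t', of y x] y by (simp add: q_def algebra_simps power2_eq_square)
    then show "q y \<le> q 0" by (simp add: q_def)
  qed
  then show ?thesis by simp
qed

lemma final_bd: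
  assumes t: "t \<in> {0..<T}"
  shows "\<bar>\<theta>x t x\<bar> \<le> (2 + 1 / r) / \<sigma>^2"
proof -
  define s where "s = \<sigma>^2"
  define X where "X = \<theta>x t x"
  define Y where "Y = \<theta> t x"
  have s0: "0 < s" using \<sigma> by (simp add: s_def)
  have s1: "s \<le> 1" using \<sigma> by (simp add: s_def power_le_one)
  have Y1: "Y^2 \<le> 1" using th_bd1[OF t, of x] unfolding Y_def
    by (metis abs_le_iff abs_square_le_1 minus_le_iff)
  have Y0: "0 \<le> Y^2" by simp
  have Pp: "0 < \<Phi> t x" by (rule Phi_pos)
  have c0: "0 \<le> Y^2 / (s * s) - X / s"
    using Phixx_nonneg[OF t, of x] Pp by (simp add: \<Phi>xx_def zero_le_mult_iff X_def Y_def s_def)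
  have c1: "Y^2 / (s * s) - X / s \<le> 1 / (r * s) + 2 / (s * s)"
    using Phixx_upper[OF t, of x] Pp by (simp add: \<Phi>xx_def K'_def X_def Y_def s_def)
  have up: "X \<le> 1 / s"
  proof -
    have "X / s \<le> Y^2 / (s * s)" using c0 by simp
    then have "X / s * s \<le> Y^2 / (s * s) * s" using s0 by (intro mult_right_mono) auto
    then have "X \<le> Y^2 / s" using s0 by (simp add: field_simps)
    also have "\<dots> \<le> 1 / s" using Y1 s0 by (intro divide_right_mono) auto
    finally show ?thesis .
  qed
  have lo: "- X \<le> 1 / r + 2 / s"
  proof -
    have "- X / s \<le> 1 / (r * s) + 2 / (s * s)" using c1 Y0 s0
      by (smt (verit) divide_nonneg_pos minus_divide_left mult_pos_pos)
    then have "- X / s * s \<le> (1 / (r * s) + 2 / (s * s)) * s" using s0 by (intro mult_right_mono) auto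
    moreover have "- X / s * s = - X" using s0 by simp
    moreover have "(1 / (r * s) + 2 / (s * s)) * s = 1 / r + 2 / s" using s0 r_pos by (simp add: field_simps)
    ultimately show ?thesis by simp
  qed
  have "1 / r \<le> (1 / r) / s" using r_pos s0 s1 by (simp add: field_simps)
  moreover have "1 / s \<le> 2 / s" using s0 by (simp add: divide_right_mono)
  moreover have "0 \<le> (1 / r) / s" using s0 r_pos by simp
  ultimately have "X \<le> 2 / s + (1 / r) / s \<and> - X \<le> 2 / s + (1 / r) / s" using up lo by linarith
  then have "\<bar>X\<bar> \<le> 2 / s + (1 / r) / s" by (simp only: abs_le_iff)
  then have "\<bar>X\<bar> \<le> (2 + 1 / r) / s" by (simp only: add_divide_distrib)
  then show ?thesis by (simp add: X_def s_def)
qed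

end


theorem mainTheorem4:
  fixes T \<kappa> \<delta> :: real and \<eta> :: "real \<Rightarrow> real"
  assumes "T > 0" and "0 < \<delta>" and "\<delta> < T"
    and "riccati_sol T \<kappa> \<eta>"
  shows "\<exists>C. \<forall>\<sigma>\<^sub>0 \<theta>. 0 < \<sigma>\<^sub>0 \<and> \<sigma>\<^sub>0 < 1 \<and> classical_sol T \<kappa> \<eta> \<delta> \<sigma>\<^sub>0 \<theta> \<longrightarrow>
           (\<forall>t\<in>{0..<T}. \<forall>x. \<bar>deriv (\<lambda>y. \<theta> t y) x\<bar> \<le> C / \<sigma>\<^sub>0^2)"
proof (intro exI[of _ "2 + 1 / rfun T \<kappa> \<eta> \<delta>"] allI impI ballI)
  fix \<sigma>0 :: real and \<theta> :: "real \<Rightarrow> real \<Rightarrow> real" and t x :: real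
  assume H: "0 < \<sigma>0 \<and> \<sigma>0 < 1 \<and> classical_sol T \<kappa> \<eta> \<delta> \<sigma>0 \<theta>" and t: "t \<in> {0..<T}"
  from H obtain \<theta>t \<theta>x \<theta>xx B where
    d: "\<forall>t\<in>{0..<T}. \<forall>x.
            ((\<lambda>s. \<theta> s x) has_real_derivative \<theta>t t x) (at t within {0..<T})
          \<and> ((\<lambda>y. \<theta> t y) has_real_derivative \<theta>x t x) (at x)
          \<and> ((\<lambda>y. \<theta>x t y) has_real_derivative \<theta>xx t x) (at x)
          \<and> \<theta>t t x - (1 / (wfun T \<kappa> \<eta> t)^2) * \<theta> t x * \<theta>x t x
              + 1/2 * \<sigma>0^2 * (1 / (wfun T \<kappa> \<eta> t)^2) * \<theta>xx t x = 0"
    and ct: "continuous_on ({0..<T} \<times> UNIV) (\<lambda>(t,x). \<theta>t t x)"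
    and cx: "continuous_on ({0..<T} \<times> UNIV) (\<lambda>(t,x). \<theta>x t x)"
    and c0: "continuous_on ({0..T} \<times> UNIV) (\<lambda>(t,x). \<theta> t x)"
    and bd: "\<forall>t\<in>{0..T}. \<forall>x. \<bar>\<theta> t x\<bar> \<le> B"
    and tm: "\<forall>x. \<theta> T x = gfun T \<kappa> \<eta> \<delta> x"
    unfolding classical_sol_def by blast
  interpret S: sol T \<kappa> \<delta> \<sigma>0 \<eta> \<theta> \<theta>t \<theta>x \<theta>xx B
  proof (unfold_locales)
    show "0 < T" "0 < \<delta>" "\<delta> < T" "riccati_sol T \<kappa> \<eta>" using assms by auto
    show "0 < \<sigma>0" "\<sigma>0 < 1" using H by auto
  qed (use d ct cx c0 bd tm in auto)
  have "deriv (\<lambda>y. \<theta> t y) x = \<theta>x t x" using S.der_x[OF t] by (rule DERIV_imp_deriv)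
  then show "\<bar>deriv (\<lambda>y. \<theta> t y) x\<bar> \<le> (2 + 1 / rfun T \<kappa> \<eta> \<delta>) / \<sigma>0^2"
    using S.final_bd[OF t, of x] by (simp add: S.r_def)
qed


end
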